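(* $\mathsf{ICK}$ is sound and complete with respect to conditional frames.
   Context: Formulas are generated by $\phi ::= p\mid\bot\mid\phi\wedge\phi\mid\phi\vee\phi\mid\phi\to\phi\mid\phi\mathrel{\Box\!\!\!\rightarrow}\phi$. $\mathsf{ICK}$ is the smallest set of formulas containing intuitionistic propositional logic, $(p\mathrel{\Box\!\!\!\rightarrow}(q\wedge r))\leftrightarrow((p\mathrel{\Box\!\!\!\rightarrow} q)\wedge(p\mathrel{\Box\!\!\!\rightarrow} r))$ and $(p\mathrel{\Box\!\!\!\rightarrow}\top)\leftrightarrow\top$, closed under uniform substitution, modus ponens, and the congruence rules for both arguments of $\mathrel{\Box\!\!\!\rightarrow}$. A conditional frame is $(X,\leq,\mathcal{R})$ with $(X,\leq)$ a nonempty preorder and $\mathcal{R}=\{R_a\mid a \text{ an upset}\}$ relations on $X$ with $(\leq\circ R_a)\subseteq(R_a\circ\leq)$ for every upset $a$. Valuations assign upsets to proposition letters; intuitionistic connectives are interpreted as in Kripke semantics, and $x\models\phi\mathrel{\Box\!\!\!\rightarrow}\psi$ iff every $y$ with $xR_{V(\phi)}y$ satisfies $\psi$, where $V(\phi)$ is the truth set of $\phi$. *)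

theory Defs
  imports Main
begin

datatype form =
    Var nat
  | Bot
  | Conj form form
  | Disj form form
  | Imp form form
  | Cond form form

definition Top :: form where "Top = Imp Bot Bot"
definition Iff :: "form \<Rightarrow> form \<Rightarrow> form" where
  "Iff a b = Conj (Imp a b) (Imp b a)"

primrec subst :: "(nat \<Rightarrow> form) \<Rightarrow> form \<Rightarrow> form" where
  "subst s (Var p) = s p"
| "subst s Bot = Bot"
| "subst s (Conj a b) = Conj (subst s a) (subst s b)"
| "subst s (Disj a b) = Disj (subst s a) (subst s b)"
| "subst s (Imp a b) = Imp (subst s a) (subst s b)"
| "subst s (Cond a b) = Cond (subst s a) (subst s b)"

inductive_set ICK :: "form set" where
  ax1: "Imp a (Imp b a) \<in> ICK"
| ax2: "Imp (Imp a (Imp b c)) (Imp (Imp a b) (Imp a c)) \<in> ICK"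
| ax3: "Imp (Conj a b) a \<in> ICK"
| ax4: "Imp (Conj a b) b \<in> ICK"
| ax5: "Imp a (Imp b (Conj a b)) \<in> ICK"
| ax6: "Imp a (Disj a b) \<in> ICK"
| ax7: "Imp b (Disj a b) \<in> ICK"
| ax8: "Imp (Imp a c) (Imp (Imp b c) (Imp (Disj a b) c)) \<in> ICK"
| ax9: "Imp Bot a \<in> ICK"
| axC: "Iff (Cond (Var 0) (Conj (Var 1) (Var 2)))
            (Conj (Cond (Var 0) (Var 1)) (Cond (Var 0) (Var 2))) \<in> ICK"
| axN: "Iff (Cond (Var 0) Top) Top \<in> ICK"
| us: "a \<in> ICK \<Longrightarrow> subst s a \<in> ICK"
| mp: "Imp a b \<in> ICK \<Longrightarrow> a \<in> ICK \<Longrightarrow> b \<in> ICK"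
| congL: "Iff a b \<in> ICK \<Longrightarrow> Iff (Cond a c) (Cond b c) \<in> ICK"
| congR: "Iff a b \<in> ICK \<Longrightarrow> Iff (Cond c a) (Cond c b) \<in> ICK"

definition upset :: "'w set \<Rightarrow> ('w \<Rightarrow> 'w \<Rightarrow> bool) \<Rightarrow> 'w set \<Rightarrow> bool" where
  "upset X le a \<longleftrightarrow> a \<subseteq> X \<and> (\<forall>x y. x \<in> a \<and> le x y \<longrightarrow> y \<in> a)"

text \<open>A conditional frame (X, le, R): X nonempty, le a preorder on X, and for every
upset a a relation R a on X with (le o R a) \<subseteq> (R a o le), composition read
diagrammatically: x le y, y R_a z implies x R_a w and w le z for some w.\<close>

definition cond_frame :: "'w set \<Rightarrow> ('w \<Rightarrow> 'w \<Rightarrow> bool) \<Rightarrow> ('w set \<Rightarrow> 'w \<Rightarrow> 'w \<Rightarrow> bool) \<Rightarrow> bool" where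
  "cond_frame X le R \<longleftrightarrow>
     X \<noteq> {} \<and>
     (\<forall>x y. le x y \<longrightarrow> x \<in> X \<and> y \<in> X) \<and>
     (\<forall>x\<in>X. le x x) \<and>
     (\<forall>x y z. le x y \<and> le y z \<longrightarrow> le x z) \<and>
     (\<forall>a. upset X le a \<longrightarrow>
        (\<forall>x y. R a x y \<longrightarrow> x \<in> X \<and> y \<in> X) \<and>
        (\<forall>x y z. le x y \<and> R a y z \<longrightarrow> (\<exists>w. R a x w \<and> le w z)))"

primrec tset :: "'w set \<Rightarrow> ('w \<Rightarrow> 'w \<Rightarrow> bool) \<Rightarrow> ('w set \<Rightarrow> 'w \<Rightarrow> 'w \<Rightarrow> bool)
                  \<Rightarrow> (nat \<Rightarrow> 'w set) \<Rightarrow> form \<Rightarrow> 'w set" where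
  "tset X le R V (Var p) = V p \<inter> X"
| "tset X le R V Bot = {}"
| "tset X le R V (Conj a b) = tset X le R V a \<inter> tset X le R V b"
| "tset X le R V (Disj a b) = tset X le R V a \<union> tset X le R V b"
| "tset X le R V (Imp a b) =
     {x \<in> X. \<forall>y. le x y \<longrightarrow> y \<in> tset X le R V a \<longrightarrow> y \<in> tset X le R V b}"
| "tset X le R V (Cond a b) =
     {x \<in> X. \<forall>y. R (tset X le R V a) x y \<longrightarrow> y \<in> tset X le R V b}"

definition frame_valid :: "'w set \<Rightarrow> ('w \<Rightarrow> 'w \<Rightarrow> bool) \<Rightarrow> ('w set \<Rightarrow> 'w \<Rightarrow> 'w \<Rightarrow> bool) \<Rightarrow> form \<Rightarrow> bool" where
  "frame_valid X le R \<phi> \<longleftrightarrow>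
     (\<forall>V. (\<forall>p. upset X le (V p)) \<longrightarrow> tset X le R V \<phi> = X)"

definition cf_valid :: "'w itself \<Rightarrow> form \<Rightarrow> bool" where
  "cf_valid _ \<phi> \<longleftrightarrow>
     (\<forall>(X::'w set) le R. cond_frame X le R \<longrightarrow> frame_valid X le R \<phi>)"

end

theory Submission
  imports Defs
begin


lemma subst_Top[simp]: "subst s Top = Top" by (simp add: Top_def)
lemma subst_Iff[simp]: "subst s (Iff a b) = Iff (subst s a) (subst s b)" by (simp add: Iff_def)

lemma ICK_mp2: "Imp a b \<in> ICK \<Longrightarrow> a \<in> ICK \<Longrightarrow> b \<in> ICK" by (rule ICK.mp)

lemma ICK_iffI: "Imp a b \<in> ICK \<Longrightarrow> Imp b a \<in> ICK \<Longrightarrow> Iff a b \<in> ICK"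
  unfolding Iff_def by (meson ICK.ax5 ICK.mp)
lemma ICK_iffD1: "Iff a b \<in> ICK \<Longrightarrow> Imp a b \<in> ICK"
  unfolding Iff_def by (meson ICK.ax3 ICK.mp)
lemma ICK_iffD2: "Iff a b \<in> ICK \<Longrightarrow> Imp b a \<in> ICK"
  unfolding Iff_def by (meson ICK.ax4 ICK.mp)

lemma ICK_id: "Imp a a \<in> ICK"
proof -
  have 1: "Imp (Imp a (Imp (Imp a a) a)) (Imp (Imp a (Imp a a)) (Imp a a)) \<in> ICK" by (rule ICK.ax2)
  have 2: "Imp a (Imp (Imp a a) a) \<in> ICK" by (rule ICK.ax1)
  have 3: "Imp a (Imp a a) \<in> ICK" by (rule ICK.ax1)
  show ?thesis using 1 2 3 by (meson ICK.mp)
qed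

lemma Top_ICK: "Top \<in> ICK" unfolding Top_def by (rule ICK.ax9)

inductive deriv :: "form set \<Rightarrow> form \<Rightarrow> bool" for G where
  dI: "a \<in> ICK \<Longrightarrow> deriv G a"
| dA: "a \<in> G \<Longrightarrow> deriv G a"
| dM: "deriv G (Imp a b) \<Longrightarrow> deriv G a \<Longrightarrow> deriv G b"

lemma deriv_mono: "deriv G a \<Longrightarrow> G \<subseteq> H \<Longrightarrow> deriv H a"
  by (induction rule: deriv.induct) (auto intro: deriv.intros)

lemma deriv_empty: "deriv {} a \<Longrightarrow> a \<in> ICK"
  by (induction rule: deriv.induct) (auto intro: ICK.mp)

lemma deduction: "deriv (insert a G) b \<Longrightarrow> deriv G (Imp a b)"
proof (induction rule: deriv.induct)
  case (dI c)
  then show ?case by (meson ICK.ax1 deriv.dI deriv.dM)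
next
  case (dA c)
  then show ?case
  proof (cases "c = a")
    case True then show ?thesis using ICK_id deriv.dI by blast
  next
    case False then show ?thesis using dA by (meson ICK.ax1 deriv.dA deriv.dI deriv.dM insertE)
  qed
next
  case (dM c d)
  then show ?case by (meson ICK.ax2 deriv.dI deriv.dM)
qed

lemma undeduction: "deriv G (Imp a b) \<Longrightarrow> deriv (insert a G) b"
  by (meson deriv.dA deriv.dM deriv_mono insertI1 subset_insertI)

lemma cut: "deriv G a \<Longrightarrow> deriv (insert a G) b \<Longrightarrow> deriv G b"
  using deduction deriv.dM by blast

lemma deriv_single: "deriv {a} b \<Longrightarrow> Imp a b \<in> ICK"
  using deduction deriv_empty by blast

lemma deriv_compact: "deriv G a \<Longrightarrow> \<exists>F. finite F \<and> F \<subseteq> G \<and> deriv F a"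
proof (induction rule: deriv.induct)
  case (dI a) then show ?case using deriv.dI by blast
next
  case (dA a) then show ?case by (intro exI[of _ "{a}"]) (auto intro: deriv.dA)
next
  case (dM a b)
  then obtain F1 F2 where "finite F1" "F1 \<subseteq> G" "deriv F1 (Imp a b)" "finite F2" "F2 \<subseteq> G" "deriv F2 a" by blast
  then show ?case
    by (intro exI[of _ "F1 \<union> F2"]) (meson Un_upper1 Un_upper2 deriv.dM deriv_mono finite_UnI le_sup_iff)
qed

definition ptheory :: "form set \<Rightarrow> bool" where
  "ptheory D \<longleftrightarrow> (\<forall>c. deriv D c \<longrightarrow> c \<in> D) \<and> Bot \<notin> D \<and>
     (\<forall>a b. Disj a b \<in> D \<longrightarrow> a \<in> D \<or> b \<in> D)"

lemma lindenbaum: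
  assumes "\<not> deriv G p"
  shows "\<exists>D. G \<subseteq> D \<and> ptheory D \<and> p \<notin> D"
proof -
  let ?A = "{D. G \<subseteq> D \<and> \<not> deriv D p}"
  have "\<exists>M\<in>?A. \<forall>X\<in>?A. M \<subseteq> X \<longrightarrow> X = M"
  proof (rule subset_Zorn_nonempty)
    show "?A \<noteq> {}" using assms by blast
  next
    fix C assume C: "C \<noteq> {}" "subset.chain ?A C"
    then have CA: "C \<subseteq> ?A" by (simp add: subset.chain_def)
    have "\<not> deriv (\<Union>C) p"
    proof
      assume "deriv (\<Union>C) p"
      then obtain F where F: "finite F" "F \<subseteq> \<Union>C" "deriv F p" using deriv_compact by blast
      then obtain B where "B \<in> C" "F \<subseteq> B" using finite_subset_Union_chain[OF F(1,2) C(1) C(2)] by blast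
      then show False using CA F(3) deriv_mono by blast
    qed
    moreover have "G \<subseteq> \<Union>C" using C CA by blast
    ultimately show "\<Union>C \<in> ?A" by blast
  qed
  then obtain M where MA: "M \<in> ?A" and maxA: "\<forall>X\<in>?A. M \<subseteq> X \<longrightarrow> X = M"
    by blast
  have M: "G \<subseteq> M" "\<not> deriv M p" using MA by auto
  have max: "X = M" if "G \<subseteq> X" "\<not> deriv X p" "M \<subseteq> X" for X
    using maxA that by blast
  have ins: "deriv (insert a M) p" if "a \<notin> M" for a
    using max[of "insert a M"] M that by blast
  have closed: "c \<in> M" if "deriv M c" for c
    using ins cut M(2) that by blast
  have bot: "Bot \<notin> M"
    using M(2) by (meson ICK.ax9 deriv.dA deriv.dI deriv.dM)
  have prime: "a \<in> M \<or> b \<in> M" if "Disj a b \<in> M" for a b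
  proof (rule ccontr)
    assume "\<not> (a \<in> M \<or> b \<in> M)"
    then have "deriv M (Imp a p)" "deriv M (Imp b p)" using ins deduction by blast+
    then have "deriv M p" using that by (meson ICK.ax8 deriv.dA deriv.dI deriv.dM)
    then show False using M(2) by blast
  qed
  have "p \<notin> M" using M(2) deriv.dA by blast
  then show ?thesis using M(1) closed bot prime unfolding ptheory_def by blast
qed



lemma tset_sub: "tset X le R V a \<subseteq> X"
  by (induction a) auto

lemma tset_subst: "tset X le R V (subst s a) = tset X le R (\<lambda>p. tset X le R V (s p)) a"
proof (induction a)
  case (Var p) then show ?case using tset_sub[of X le R V "s p"] by auto
qed auto

lemma tset_up:
  fixes V :: "nat \<Rightarrow> 'a set"
  assumes cf: "cond_frame X le R" and V: "\<forall>p. upset X le (V p)"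
  shows "upset X le (tset X le R V a)"
proof (induction a)
  case (Var p) then show ?case using V unfolding upset_def by auto
next
  case Bot then show ?case by (simp add: upset_def)
next
  case (Conj a b) then show ?case by (auto simp: upset_def)
next
  case (Disj a b) then show ?case by (auto simp: upset_def)
next
  case (Imp a b)
  have tr: "\<And>x y z. le x y \<Longrightarrow> le y z \<Longrightarrow> le x z" and lX: "\<And>x y. le x y \<Longrightarrow> y \<in> X"
    using cf unfolding cond_frame_def by blast+
  show ?case unfolding upset_def using tr lX by auto
next
  case (Cond a b)
  have fc: "\<And>x y z. le x y \<Longrightarrow> R (tset X le R V a) y z \<Longrightarrow> \<exists>w. R (tset X le R V a) x w \<and> le w z"
    using cf Cond.IH(1) unfolding cond_frame_def by blast
  have lX: "\<And>x y. le x y \<Longrightarrow> y \<in> X"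
    using cf unfolding cond_frame_def by blast+
  show ?case unfolding upset_def
  proof (intro conjI allI impI)
    show "tset X le R V (Cond a b) \<subseteq> X" by auto
  next
    fix x y assume h: "x \<in> tset X le R V (Cond a b) \<and> le x y"
    show "y \<in> tset X le R V (Cond a b)"
    proof -
      have "z \<in> tset X le R V b" if Rz: "R (tset X le R V a) y z" for z
      proof -
        obtain w where "R (tset X le R V a) x w" "le w z" using fc h Rz by blast
        then show ?thesis using h Cond.IH(2) unfolding upset_def by auto
      qed
      then show ?thesis using h lX by auto
    qed
  qed
qed

lemma imp_valid:
  fixes V :: "nat \<Rightarrow> 'a set"
  assumes cf: "cond_frame X le R" and V: "\<forall>p. upset X le (V p)"
  shows "tset X le R V (Imp a b) = X \<longleftrightarrow> tset X le R V a \<subseteq> tset X le R V b"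
proof
  assume h: "tset X le R V (Imp a b) = X"
  have refl: "\<And>x. x \<in> X \<Longrightarrow> le x x" using cf unfolding cond_frame_def by blast
  show "tset X le R V a \<subseteq> tset X le R V b"
  proof
    fix x assume x: "x \<in> tset X le R V a"
    then have "x \<in> X" using tset_sub[of X le R V a] by blast
    then have "x \<in> tset X le R V (Imp a b)" using h by (simp only:)
    then show "x \<in> tset X le R V b" using x refl \<open>x \<in> X\<close> by auto
  qed
next
  assume "tset X le R V a \<subseteq> tset X le R V b"
  then show "tset X le R V (Imp a b) = X" by auto
qed

lemma iff_valid:
  fixes V :: "nat \<Rightarrow> 'a set"
  assumes cf: "cond_frame X le R" and V: "\<forall>p. upset X le (V p)"
  shows "tset X le R V (Iff a b) = X \<longleftrightarrow> tset X le R V a = tset X le R V b"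
proof -
  have "tset X le R V (Iff a b) = tset X le R V (Imp a b) \<inter> tset X le R V (Imp b a)"
    by (simp only: Iff_def tset.simps(3))
  moreover have "tset X le R V (Imp a b) \<subseteq> X" "tset X le R V (Imp b a) \<subseteq> X" by (rule tset_sub)+
  ultimately have "tset X le R V (Iff a b) = X \<longleftrightarrow> tset X le R V (Imp a b) = X \<and> tset X le R V (Imp b a) = X"
    by blast
  then show ?thesis using imp_valid[OF cf V] by blast
qed


lemma frame_props:
  assumes cf: "cond_frame X le R"
  shows "\<And>x. x \<in> X \<Longrightarrow> le x x" "\<And>x y z. le x y \<Longrightarrow> le y z \<Longrightarrow> le x z"
    "\<And>x y. le x y \<Longrightarrow> x \<in> X" "\<And>x y. le x y \<Longrightarrow> y \<in> X"
  using cf unfolding cond_frame_def by blast+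

lemma frame_R: "cond_frame X le R \<Longrightarrow> upset X le a \<Longrightarrow> R a x y \<Longrightarrow> y \<in> X"
  unfolding cond_frame_def by blast

lemma pers:
  fixes V :: "nat \<Rightarrow> 'a set"
  assumes cf: "cond_frame X le R" and V: "\<forall>p. upset X le (V p)"
  shows "x \<in> tset X le R V a \<Longrightarrow> le x y \<Longrightarrow> y \<in> tset X le R V a"
  using tset_up[OF cf V, of a] unfolding upset_def by blast

lemma valid_intro:
  assumes "\<And>V. \<forall>p::nat. upset X le (V p) \<Longrightarrow> tset X le R V a = X"
  shows "frame_valid X le R a"
  using assms unfolding frame_valid_def by blast

lemma imp_valid_I:
  "(\<And>x. x \<in> X \<Longrightarrow> x \<in> tset X le R V a \<Longrightarrow> x \<in> tset X le R V b) \<Longrightarrow>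
   (\<And>x y. le x y \<Longrightarrow> x \<in> X \<and> y \<in> X) \<Longrightarrow> tset X le R V (Imp a b) = X"
  by auto

lemma imp_memI: "x \<in> X \<Longrightarrow> (\<And>y. le x y \<Longrightarrow> y \<in> tset X le R V a \<Longrightarrow> y \<in> tset X le R V b) \<Longrightarrow> x \<in> tset X le R V (Imp a b)"
  by simp

lemma sound_ax1:
  fixes V :: "nat \<Rightarrow> 'a set"
  assumes cf: "cond_frame X le R" and V: "\<forall>p. upset X le (V p)"
  shows "tset X le R V (Imp a (Imp b a)) = X"
  apply (rule set_eqI, rule iffI, use tset_sub[of X le R V] in blast)
  apply (rule imp_memI, assumption)
  apply (rule imp_memI, use frame_props[OF cf] in blast)
  using pers[OF cf V, of _ a] by blast

lemma sound_ax2: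
  fixes V :: "nat \<Rightarrow> 'a set"
  assumes cf: "cond_frame X le R" and V: "\<forall>p. upset X le (V p)"
  shows "tset X le R V (Imp (Imp a (Imp b c)) (Imp (Imp a b) (Imp a c))) = X"
proof -
  note fp = frame_props[OF cf]
  let ?a = "tset X le R V a" and ?b = "tset X le R V b" and ?c = "tset X le R V c"
  have H: "x \<in> ?c" if "le x0 y" "y \<in> tset X le R V (Imp a (Imp b c))" "le y z" "z \<in> tset X le R V (Imp a b)"
    "le z x" "x \<in> ?a" for x0 y z x
  proof -
    have xX: "x \<in> X" using fp(4) that by blast
    have "le y x" using fp(2) that by blast
    then have 1: "x \<in> tset X le R V (Imp b c)" using that by auto
    have "x \<in> ?b" using that fp(1) xX by auto
    then show ?thesis using 1 fp(1) xX by auto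
  qed
  show ?thesis
    apply (rule set_eqI, rule iffI, use tset_sub[of X le R V] in blast)
    apply (rule imp_memI, assumption)
    apply (rule imp_memI, use fp in blast)
    apply (rule imp_memI, use fp in blast)
    using H by blast
qed

lemma sound_ax8:
  fixes V :: "nat \<Rightarrow> 'a set"
  assumes cf: "cond_frame X le R" and V: "\<forall>p. upset X le (V p)"
  shows "tset X le R V (Imp (Imp a c) (Imp (Imp b c) (Imp (Disj a b) c))) = X"
proof -
  note fp = frame_props[OF cf]
  have H: "x \<in> tset X le R V c" if "le x0 y" "y \<in> tset X le R V (Imp a c)" "le y z" "z \<in> tset X le R V (Imp b c)"
    "le z x" "x \<in> tset X le R V (Disj a b)" for x0 y z x
  proof -
    have xX: "x \<in> X" using fp(4) that by blast
    have "le y x" using fp(2) that by blast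
    then show ?thesis using that fp(1) xX by auto
  qed
  show ?thesis
    apply (rule set_eqI, rule iffI, use tset_sub[of X le R V] in blast)
    apply (rule imp_memI, assumption)
    apply (rule imp_memI, use fp in blast)
    apply (rule imp_memI, use fp in blast)
    using H by blast
qed

lemma sound_ax5:
  fixes V :: "nat \<Rightarrow> 'a set"
  assumes cf: "cond_frame X le R" and V: "\<forall>p. upset X le (V p)"
  shows "tset X le R V (Imp a (Imp b (Conj a b))) = X"
  apply (rule set_eqI, rule iffI, use tset_sub[of X le R V] in blast)
  apply (rule imp_memI, assumption)
  apply (rule imp_memI, use frame_props[OF cf] in blast)
  using pers[OF cf V, of _ a] by simp

lemma sound_simple:
  fixes V :: "nat \<Rightarrow> 'a set"
  assumes cf: "cond_frame X le R" and V: "\<forall>p. upset X le (V p)"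
  shows "tset X le R V (Imp (Conj a b) a) = X" "tset X le R V (Imp (Conj a b) b) = X"
    "tset X le R V (Imp a (Disj a b)) = X" "tset X le R V (Imp b (Disj a b)) = X"
    "tset X le R V (Imp Bot a) = X"
  by (rule set_eqI, rule iffI, use tset_sub[of X le R V] in blast, rule imp_memI, assumption, simp)+

lemma soundness:
  assumes cf: "cond_frame X le R"
  shows "\<phi> \<in> ICK \<Longrightarrow> frame_valid X le R \<phi>"
proof (induction rule: ICK.induct)
  case (ax1 a b) show ?case by (rule valid_intro) (rule sound_ax1[OF cf])
next
  case (ax2 a b c) show ?case by (rule valid_intro) (rule sound_ax2[OF cf])
next
  case (ax3 a b) show ?case by (rule valid_intro) (rule sound_simple[OF cf])
next
  case (ax4 a b) show ?case by (rule valid_intro) (rule sound_simple[OF cf])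
next
  case (ax5 a b) show ?case by (rule valid_intro) (rule sound_ax5[OF cf])
next
  case (ax6 a b) show ?case by (rule valid_intro) (rule sound_simple[OF cf])
next
  case (ax7 a b) show ?case by (rule valid_intro) (rule sound_simple[OF cf])
next
  case (ax8 a b c) show ?case by (rule valid_intro) (rule sound_ax8[OF cf])
next
  case (ax9 a) show ?case by (rule valid_intro) (rule sound_simple[OF cf])
next
  case axC
  show ?case unfolding frame_valid_def
  proof (intro allI impI)
    fix V assume V: "\<forall>p::nat. upset X le (V p)"
    show "tset X le R V (Iff (Cond (Var 0) (Conj (Var 1) (Var 2))) (Conj (Cond (Var 0) (Var 1)) (Cond (Var 0) (Var 2)))) = X"
      unfolding iff_valid[OF cf V] by auto
  qed
next
  case axN
  show ?case unfolding frame_valid_def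
  proof (intro allI impI)
    fix V assume V: "\<forall>p::nat. upset X le (V p)"
    have T: "tset X le R V Top = X" by (auto simp: Top_def)
    have RX: "\<And>x y. R (V 0 \<inter> X) x y \<Longrightarrow> y \<in> X"
      using frame_R[OF cf, of "V 0 \<inter> X"] tset_up[OF cf V, of "Var 0"] by simp
    show "tset X le R V (Iff (Cond (Var 0) Top) Top) = X"
      unfolding iff_valid[OF cf V] using RX by (auto simp: T)
  qed
next
  case (us a s)
  show ?case unfolding frame_valid_def
  proof (intro allI impI)
    fix V assume V: "\<forall>p::nat. upset X le (V p)"
    have "\<forall>p. upset X le (tset X le R V (s p))" using tset_up[OF cf V] by blast
    then show "tset X le R V (subst s a) = X"
      unfolding tset_subst using us.IH[unfolded frame_valid_def, rule_format, of "\<lambda>p. tset X le R V (s p)"] by blast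
  qed
next
  case (mp a b)
  show ?case unfolding frame_valid_def
  proof (intro allI impI)
    fix V assume V: "\<forall>p::nat. upset X le (V p)"
    have "tset X le R V a \<subseteq> tset X le R V b"
      using mp.IH(1) V imp_valid[OF cf V] unfolding frame_valid_def by blast
    moreover have "tset X le R V a = X" using mp.IH(2) V unfolding frame_valid_def by blast
    ultimately show "tset X le R V b = X" using tset_sub[of X le R V b] by blast
  qed
next
  case (congL a b c)
  show ?case unfolding frame_valid_def
  proof (intro allI impI)
    fix V assume V: "\<forall>p::nat. upset X le (V p)"
    have "tset X le R V a = tset X le R V b"
      using congL.IH V iff_valid[OF cf V] unfolding frame_valid_def by blast
    then show "tset X le R V (Iff (Cond a c) (Cond b c)) = X"
      unfolding iff_valid[OF cf V] by simp
  qed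
next
  case (congR a b c)
  show ?case unfolding frame_valid_def
  proof (intro allI impI)
    fix V assume V: "\<forall>p::nat. upset X le (V p)"
    have "tset X le R V a = tset X le R V b"
      using congR.IH V iff_valid[OF cf V] unfolding frame_valid_def by blast
    then show "tset X le R V (Iff (Cond c a) (Cond c b)) = X"
      unfolding iff_valid[OF cf V] by simp
  qed
qed



lemma pt_closed: "ptheory D \<Longrightarrow> deriv D c \<Longrightarrow> c \<in> D"
  unfolding ptheory_def by blast
lemma pt_ICK: "ptheory D \<Longrightarrow> c \<in> ICK \<Longrightarrow> c \<in> D"
  using pt_closed deriv.dI by blast
lemma pt_mp: "ptheory D \<Longrightarrow> Imp a b \<in> D \<Longrightarrow> a \<in> D \<Longrightarrow> b \<in> D"
  using pt_closed deriv.dA deriv.dM by meson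
lemma pt_conj: "ptheory D \<Longrightarrow> Conj a b \<in> D \<longleftrightarrow> a \<in> D \<and> b \<in> D"
  by (meson ICK.ax3 ICK.ax4 ICK.ax5 pt_ICK pt_mp)
lemma pt_disj: "ptheory D \<Longrightarrow> Disj a b \<in> D \<longleftrightarrow> a \<in> D \<or> b \<in> D"
  unfolding ptheory_def by (meson ICK.ax6 ICK.ax7 deriv.dA deriv.dI deriv.dM)
lemma pt_iff: "ptheory D \<Longrightarrow> Iff a b \<in> ICK \<Longrightarrow> a \<in> D \<longleftrightarrow> b \<in> D"
  by (meson ICK_iffD1 ICK_iffD2 pt_ICK pt_mp)
lemma pt_bot: "ptheory D \<Longrightarrow> Bot \<notin> D"
  unfolding ptheory_def by blast

definition CX :: "form set set" where "CX = {D. ptheory D}"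
definition Cle :: "form set \<Rightarrow> form set \<Rightarrow> bool" where
  "Cle G D \<longleftrightarrow> G \<in> CX \<and> D \<in> CX \<and> G \<subseteq> D"
definition CR :: "form set set \<Rightarrow> form set \<Rightarrow> form set \<Rightarrow> bool" where
  "CR a G D \<longleftrightarrow> G \<in> CX \<and> D \<in> CX \<and> (\<exists>f. a = {T\<in>CX. f \<in> T} \<and> (\<forall>g. Cond f g \<in> G \<longrightarrow> g \<in> D))"
definition CV :: "nat \<Rightarrow> form set set" where "CV p = {T\<in>CX. Var p \<in> T}"

lemma imp_ext:
  assumes "\<forall>T\<in>CX. a \<in> T \<longrightarrow> b \<in> T"
  shows "Imp a b \<in> ICK"
proof (rule ccontr)
  assume "Imp a b \<notin> ICK"
  then have "\<not> deriv {a} b" using deriv_single by blast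
  then obtain D where "{a} \<subseteq> D" "ptheory D" "b \<notin> D" using lindenbaum by blast
  then show False using assms unfolding CX_def by blast
qed

lemma equiv_ext:
  assumes "{T\<in>CX. a \<in> T} = {T\<in>CX. b \<in> T}"
  shows "Iff a b \<in> ICK"
proof (rule ICK_iffI)
  show "Imp a b \<in> ICK" by (rule imp_ext) (use assms in blast)
  show "Imp b a \<in> ICK" by (rule imp_ext) (use assms in blast)
qed

lemma axC_inst: "Iff (Cond f (Conj x y)) (Conj (Cond f x) (Cond f y)) \<in> ICK"
proof -
  have "subst (\<lambda>n. if n = 0 then f else if n = 1 then x else y)
     (Iff (Cond (Var 0) (Conj (Var 1) (Var 2))) (Conj (Cond (Var 0) (Var 1)) (Cond (Var 0) (Var 2)))) \<in> ICK"
    by (rule ICK.us[OF ICK.axC])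
  then show ?thesis by simp
qed

lemma axN_inst: "Iff (Cond f Top) Top \<in> ICK"
proof -
  have "subst (\<lambda>n. f) (Iff (Cond (Var 0) Top) Top) \<in> ICK"
    by (rule ICK.us[OF ICK.axN])
  then show ?thesis by simp
qed

lemma thm_iff_top: "c \<in> ICK \<Longrightarrow> Iff c Top \<in> ICK"
  by (meson ICK.ax1 ICK.mp ICK_iffI Top_ICK)

lemma ipc_mp_conj: "Iff (Conj (Imp a b) a) (Conj (Conj (Imp a b) a) b) \<in> ICK"
proof (rule ICK_iffI)
  let ?c = "Conj (Imp a b) a"
  have 1: "deriv {?c} ?c" by (rule deriv.dA) simp
  have 2: "deriv {?c} (Imp a b)" by (rule deriv.dM[OF deriv.dI[OF ICK.ax3] 1])
  have 3: "deriv {?c} a" by (rule deriv.dM[OF deriv.dI[OF ICK.ax4] 1])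
  have 4: "deriv {?c} b" by (rule deriv.dM[OF 2 3])
  have "deriv {?c} (Conj ?c b)" by (rule deriv.dM[OF deriv.dM[OF deriv.dI[OF ICK.ax5] 1] 4])
  then show "Imp ?c (Conj ?c b) \<in> ICK" by (rule deriv_single)
  show "Imp (Conj ?c b) ?c \<in> ICK" by (rule ICK.ax3)
qed

lemma cond_filter:
  assumes G: "ptheory G"
  shows "deriv {g. Cond f g \<in> G} c \<Longrightarrow> Cond f c \<in> G"
proof (induction rule: deriv.induct)
  case (dI c)
  have "Iff (Cond f c) (Cond f Top) \<in> ICK" using ICK.congR thm_iff_top dI by blast
  moreover have "Cond f Top \<in> G" using pt_iff[OF G axN_inst] pt_ICK[OF G Top_ICK] by blast
  ultimately show ?case using pt_iff[OF G] by blast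
next
  case (dA c) then show ?case by simp
next
  case (dM a b)
  have "Conj (Cond f (Imp a b)) (Cond f a) \<in> G" using dM.IH pt_conj[OF G] by blast
  then have "Cond f (Conj (Imp a b) a) \<in> G" using pt_iff[OF G axC_inst] by blast
  then have "Cond f (Conj (Conj (Imp a b) a) b) \<in> G"
    using pt_iff[OF G ICK.congR[OF ipc_mp_conj]] by blast
  then have "Conj (Cond f (Conj (Imp a b) a)) (Cond f b) \<in> G" using pt_iff[OF G axC_inst] by blast
  then show ?case using pt_conj[OF G] by blast
qed

lemma truth:
  "tset CX Cle CR CV \<phi> = {T\<in>CX. \<phi> \<in> T}"
proof (induction \<phi>)
  case (Var p) then show ?case by (auto simp: CV_def)
next
  case Bot then show ?case using pt_bot unfolding CX_def by auto
next
  case (Conj a b) then show ?case using pt_conj unfolding CX_def by auto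
next
  case (Disj a b) then show ?case using pt_disj unfolding CX_def by auto
next
  case (Imp a b)
  show ?case
  proof (rule set_eqI, rule iffI)
    fix T assume "T \<in> tset CX Cle CR CV (Imp a b)"
    then have T: "T \<in> CX" and H: "\<And>D. Cle T D \<Longrightarrow> D \<in> CX \<Longrightarrow> a \<in> D \<Longrightarrow> b \<in> D"
      using Imp.IH by auto
    have "Imp a b \<in> T"
    proof (rule ccontr)
      assume n: "Imp a b \<notin> T"
      have "\<not> deriv (insert a T) b"
        using n deduction pt_closed T unfolding CX_def by blast
      then obtain D where "insert a T \<subseteq> D" "ptheory D" "b \<notin> D" using lindenbaum by blast
      then show False using H[of D] T unfolding Cle_def CX_def by blast
    qed
    then show "T \<in> {T \<in> CX. Imp a b \<in> T}" using T by blast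
  next
    fix T assume "T \<in> {T \<in> CX. Imp a b \<in> T}"
    then have T: "T \<in> CX" "Imp a b \<in> T" by auto
    have HB: "b \<in> D" if "Cle T D" "a \<in> D" for D
      using that T pt_mp unfolding Cle_def CX_def by blast
    have "Cle T D \<Longrightarrow> D \<in> CX" for D unfolding Cle_def by blast
    then show "T \<in> tset CX Cle CR CV (Imp a b)" using T HB Imp.IH by auto
  qed
next
  case (Cond a b)
  show ?case
  proof (rule set_eqI, rule iffI)
    fix T assume "T \<in> tset CX Cle CR CV (Cond a b)"
    then have T: "T \<in> CX" and H: "\<And>D. CR {T\<in>CX. a \<in> T} T D \<Longrightarrow> b \<in> D"
      using Cond.IH by auto
    have "Cond a b \<in> T"
    proof (rule ccontr)
      assume n: "Cond a b \<notin> T"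
      have "\<not> deriv {g. Cond a g \<in> T} b"
        using n cond_filter T unfolding CX_def by blast
      then obtain D where D: "{g. Cond a g \<in> T} \<subseteq> D" "ptheory D" "b \<notin> D" using lindenbaum by blast
      have "CR {T\<in>CX. a \<in> T} T D" unfolding CR_def using T D unfolding CX_def by blast
      then show False using H D by blast
    qed
    then show "T \<in> {T \<in> CX. Cond a b \<in> T}" using T by blast
  next
    fix T assume "T \<in> {T \<in> CX. Cond a b \<in> T}"
    then have T: "T \<in> CX" "Cond a b \<in> T" by auto
    have "D \<in> CX \<and> b \<in> D" if CRD: "CR {T\<in>CX. a \<in> T} T D" for D
    proof -
      obtain f where f: "{T\<in>CX. a \<in> T} = {T\<in>CX. f \<in> T}" "\<forall>g. Cond f g \<in> T \<longrightarrow> g \<in> D" "D \<in> CX"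
        using CRD unfolding CR_def by blast
      have "Iff (Cond a b) (Cond f b) \<in> ICK" by (rule ICK.congL[OF equiv_ext[OF f(1)]])
      then have "Cond f b \<in> T" using T pt_iff unfolding CX_def by blast
      then show ?thesis using f by blast
    qed
    then show "T \<in> tset CX Cle CR CV (Cond a b)" using T Cond.IH by auto
  qed
qed

lemma canon_frame:
  assumes ne: "CX \<noteq> {}"
  shows "cond_frame CX Cle CR"
proof -
  have fc: "\<exists>w. CR a x w \<and> Cle w z" if "Cle x y" "CR a y z" for a x y z
  proof -
    have "CR a x z" using that unfolding CR_def Cle_def by blast
    moreover have "Cle z z" using that unfolding CR_def Cle_def by blast
    ultimately show ?thesis by blast
  qed
  have rx: "x \<in> CX \<and> y \<in> CX" if "CR a x y" for a x y using that unfolding CR_def by blast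
  have le1: "x \<in> CX \<and> y \<in> CX" if "Cle x y" for x y using that unfolding Cle_def by blast
  have le2: "Cle x x" if "x \<in> CX" for x using that unfolding Cle_def by blast
  have le3: "Cle x z" if "Cle x y" "Cle y z" for x y z using that unfolding Cle_def by blast
  show ?thesis unfolding cond_frame_def using ne fc rx le1 le2 le3 by blast
qed

lemma completeness:
  assumes "cf_valid TYPE(form set) \<phi>"
  shows "\<phi> \<in> ICK"
proof (rule ccontr)
  assume n: "\<phi> \<notin> ICK"
  then have "\<not> deriv {} \<phi>" using deriv_empty by blast
  then obtain D where D: "ptheory D" "\<phi> \<notin> D" using lindenbaum by blast
  then have "D \<in> CX" unfolding CX_def by blast
  then have cf: "cond_frame CX Cle CR" using canon_frame by blast
  have "\<forall>p. upset CX Cle (CV p)" unfolding upset_def CV_def Cle_def by blast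
  then have "tset CX Cle CR CV \<phi> = CX"
    using assms cf unfolding cf_valid_def frame_valid_def by blast
  then show False using truth[of \<phi>] D \<open>D \<in> CX\<close> by blast
qed

theorem theorem4p26:
  fixes \<phi> :: form
  shows "(\<phi> \<in> ICK \<longrightarrow> cf_valid TYPE('w) \<phi>)
       \<and> (cf_valid TYPE(form set) \<phi> \<longrightarrow> \<phi> \<in> ICK)"
  using soundness completeness unfolding cf_valid_def by blast

end
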